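(* Let $3\le q\le n$ be an integer, $\Lambda\subseteq\mathbb{Z}/q\mathbb{Z}$ non-empty, $\eta=|\mathrm{supp}\,\mathcal{D}_{q,\Lambda}|\cdot2^{-n}$, $\varepsilon\in[0,1]$, let $g\colon\{0,1\}^m\to\{0,1\}^n$ be $d$-local and $\mathcal{P}_g=g(\mathcal{U}^m)$. Suppose there are $r'\ge1$ non-connected neighborhoods $N_g(i_1),\dots,N_g(i_{r'})$ each of which is Type-1, i.e., with $s_a=|N_g(i_a)|$, the marginal $\mathcal{P}_g|_{N_g(i_a)}$ has total variation distance more than $\varepsilon$ from the uniform distribution $\mathcal{U}^{s_a}$. Then $$\|\mathcal{P}_g-\mathcal{D}_{q,\Lambda}\|\ge 1-\frac{2}{\eta}\exp\{-\varepsilon^2 r'/2\}.$$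
   Context: $\mathcal{U}^s$ is uniform on $\{0,1\}^s$. $\mathcal{D}_{q,\Lambda}$ is uniform over $x\in\{0,1\}^n$ with $|x|\bmod q\in\Lambda$ ($|x|$ the Hamming weight). $\mathcal{P}|_T$ is the marginal on coordinates $T$. A function $g$ is $d$-local if each output bit depends on at most $d$ input bits; $I_g(i)$ is the set of input coordinates on which output $i$ depends; $N_g(i)=\{j: I_g(j)\cap I_g(i)\neq\emptyset\}$. Neighborhoods are non-connected if the sets $\bigcup_{j\in N_g(i_a)}I_g(j)$ are pairwise disjoint. $\|\cdot\|$ is total variation distance. *)

theory Defs
  imports "HOL-Probability.Probability"
begin

text \<open>Bit strings of length n: functions on {..<n} (value undefined outside).\<close>
definition cube :: "nat \<Rightarrow> (nat \<Rightarrow> bool) set" where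
  "cube n = PiE {..<n} (\<lambda>_. UNIV)"

definition unif_on :: "nat set \<Rightarrow> (nat \<Rightarrow> bool) pmf" where
  "unif_on T = pmf_of_set (PiE T (\<lambda>_. UNIV))"

definition marginal :: "(nat \<Rightarrow> bool) pmf \<Rightarrow> nat set \<Rightarrow> (nat \<Rightarrow> bool) pmf" where
  "marginal P T = map_pmf (\<lambda>x. restrict x T) P"

definition tv_dist :: "'a pmf \<Rightarrow> 'a pmf \<Rightarrow> real" where
  "tv_dist p q = (SUP A. \<bar>measure_pmf.prob p A - measure_pmf.prob q A\<bar>)"

definition hweight :: "nat \<Rightarrow> (nat \<Rightarrow> bool) \<Rightarrow> nat" where
  "hweight n x = card {i\<in>{..<n}. x i}"

definition Dsupp :: "nat \<Rightarrow> nat \<Rightarrow> nat set \<Rightarrow> (nat \<Rightarrow> bool) set" where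
  "Dsupp n q \<Lambda> = {x \<in> cube n. hweight n x mod q \<in> \<Lambda>}"

definition D_dist :: "nat \<Rightarrow> nat \<Rightarrow> nat set \<Rightarrow> (nat \<Rightarrow> bool) pmf" where
  "D_dist n q \<Lambda> = pmf_of_set (Dsupp n q \<Lambda>)"

definition P_dist :: "nat \<Rightarrow> ((nat \<Rightarrow> bool) \<Rightarrow> (nat \<Rightarrow> bool)) \<Rightarrow> (nat \<Rightarrow> bool) pmf" where
  "P_dist m g = map_pmf g (pmf_of_set (cube m))"

definition dep_set :: "nat \<Rightarrow> ((nat \<Rightarrow> bool) \<Rightarrow> (nat \<Rightarrow> bool)) \<Rightarrow> nat \<Rightarrow> nat set" where
  "dep_set m g i = {j\<in>{..<m}. \<exists>x\<in>cube m. g (x(j := \<not> x j)) i \<noteq> g x i}"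

definition is_map :: "nat \<Rightarrow> nat \<Rightarrow> ((nat \<Rightarrow> bool) \<Rightarrow> (nat \<Rightarrow> bool)) \<Rightarrow> bool" where
  "is_map m n g \<longleftrightarrow> g ` cube m \<subseteq> cube n"

definition local :: "nat \<Rightarrow> nat \<Rightarrow> nat \<Rightarrow> ((nat \<Rightarrow> bool) \<Rightarrow> (nat \<Rightarrow> bool)) \<Rightarrow> bool" where
  "local m n d g \<longleftrightarrow> (\<forall>i<n. card (dep_set m g i) \<le> d)"

definition nbhd :: "nat \<Rightarrow> nat \<Rightarrow> ((nat \<Rightarrow> bool) \<Rightarrow> (nat \<Rightarrow> bool)) \<Rightarrow> nat \<Rightarrow> nat set" where
  "nbhd m n g i = {j\<in>{..<n}. dep_set m g j \<inter> dep_set m g i \<noteq> {}}"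

definition nbhd_inputs :: "nat \<Rightarrow> nat \<Rightarrow> ((nat \<Rightarrow> bool) \<Rightarrow> (nat \<Rightarrow> bool)) \<Rightarrow> nat \<Rightarrow> nat set" where
  "nbhd_inputs m n g i = (\<Union>j\<in>nbhd m n g i. dep_set m g j)"

end

theory Submission imports Defs "HOL-Probability.Hoeffding" begin

lemma PiE_dflt_undefined: "PiE_dflt A undefined B = PiE A B"
  by (auto simp: PiE_dflt_def PiE_def extensional_def Pi_def)

lemma cube_Pi_pmf: "pmf_of_set (cube k) = Pi_pmf {..<k} undefined (\<lambda>_. pmf_of_set UNIV)"
  unfolding cube_def
  by (subst Pi_pmf_of_set) (auto simp: PiE_dflt_undefined)

lemma finite_cube[simp]: "finite (cube k)" unfolding cube_def by (intro finite_PiE) auto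
lemma card_cube: "card (cube k) = 2 ^ k" unfolding cube_def by (simp add: card_PiE)
lemma cube_ne[simp]: "cube k \<noteq> {}" unfolding cube_def by auto

lemma restrict_Pi_pmf_unif:
  assumes "N \<subseteq> {..<k}"
  shows "map_pmf (\<lambda>x. restrict x N) (pmf_of_set (cube k)) = unif_on N"
proof -
  have fin: "finite N" using assms finite_subset by blast
  have "unif_on N = Pi_pmf N undefined (\<lambda>_. pmf_of_set UNIV)"
    unfolding unif_on_def using fin by (subst Pi_pmf_of_set) (auto simp: PiE_dflt_undefined)
  also have "\<dots> = map_pmf (\<lambda>f x. if x \<in> N then f x else undefined) (Pi_pmf {..<k} undefined (\<lambda>_. pmf_of_set UNIV))"
    using assms by (intro Pi_pmf_subset) auto
  also have "(\<lambda>f x. if x \<in> N then f x else undefined) = (\<lambda>x. restrict x N)"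
    by (auto simp: fun_eq_iff restrict_def)
  finally show ?thesis unfolding cube_Pi_pmf by (rule sym)
qed

lemma borel_measurable_PiM_bool:
  fixes f :: "(nat \<Rightarrow> bool) \<Rightarrow> real"
  assumes "finite K"
  shows "f \<in> borel_measurable (PiM K (\<lambda>_. count_space UNIV))"
proof (rule measurableI)
  fix B :: "real set"
  define S where "S = f -` B \<inter> PiE K (\<lambda>_. UNIV :: bool set)"
  have sp: "space (PiM K (\<lambda>_. count_space (UNIV::bool set))) = PiE K (\<lambda>_. UNIV)"
    by (simp add: space_PiM)
  have "finite (PiE K (\<lambda>_. UNIV :: bool set))" using assms by (simp add: finite_PiE)
  moreover have "S \<subseteq> PiE K (\<lambda>_. UNIV)" by (simp add: S_def)
  ultimately have fin: "finite S" by (rule finite_subset[rotated])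
  have "S = (\<Union>w\<in>S. PiE K (\<lambda>i. {w i}))"
  proof (rule set_eqI, rule iffI)
    fix x assume x: "x \<in> S"
    then have "x \<in> PiE K (\<lambda>i. {x i})" unfolding S_def by (simp add: PiE_iff)
    with x show "x \<in> (\<Union>w\<in>S. PiE K (\<lambda>i. {w i}))" by blast
  next
    fix x assume "x \<in> (\<Union>w\<in>S. PiE K (\<lambda>i. {w i}))"
    then obtain w where w: "w \<in> S" "x \<in> PiE K (\<lambda>i. {w i})" by blast
    have "x \<in> PiE K (\<lambda>_. UNIV)" "w \<in> PiE K (\<lambda>_. UNIV)" using w unfolding S_def by (auto simp: PiE_iff)
    then have "x = w" by (rule PiE_ext) (use w(2) in \<open>auto simp: PiE_iff\<close>)
    with w show "x \<in> S" by simp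
  qed
  also have "\<dots> \<in> sets (PiM K (\<lambda>_. count_space UNIV))"
    using fin assms by (intro sets.finite_UN sets_PiM_I_finite) auto
  finally show "f -` B \<inter> space (PiM K (\<lambda>_. count_space UNIV)) \<in> sets (PiM K (\<lambda>_. count_space UNIV))"
    by (simp add: sp S_def)
qed auto

lemma dep_local:
  assumes "x \<in> cube m" "y \<in> cube m" "\<forall>i\<in>dep_set m g j. x i = y i"
  shows "g x j = g y j"
proof -
  have "\<And>x. x \<in> cube m \<Longrightarrow> (\<forall>i\<in>dep_set m g j. x i = y i) \<Longrightarrow> card {i\<in>{..<m}. x i \<noteq> y i} = c \<Longrightarrow> g x j = g y j" for c
  proof (induction c)
    case 0
    have "{i\<in>{..<m}. x i \<noteq> y i} = {}" using 0(3) by simp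
    have "x = y"
    proof
      fix i show "x i = y i"
      proof (cases "i < m")
        case True then show ?thesis using \<open>{i\<in>{..<m}. x i \<noteq> y i} = {}\<close> by blast
      next
        case False then show ?thesis using 0(1) \<open>y \<in> cube m\<close> unfolding cube_def
          by (simp add: PiE_def extensional_def)
      qed
    qed
    then show ?case by simp
  next
    case (Suc c)
    have "{i\<in>{..<m}. x i \<noteq> y i} \<noteq> {}" using Suc.prems(3) by (metis card.empty nat.distinct(1))
    then obtain i where i: "i < m" "x i \<noteq> y i" by blast
    then have nd: "i \<notin> dep_set m g j" using Suc.prems(2) by auto
    define x' where "x' = x(i := \<not> x i)"
    have "\<not> (\<exists>z\<in>cube m. g (z(i := \<not> z i)) j \<noteq> g z j)" using nd i by (simp add: dep_set_def)
    then have gx: "g x' j = g x j" using Suc.prems(1) unfolding x'_def by blast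
    have x'c: "x' \<in> cube m"
      unfolding cube_def PiE_iff
    proof
      show "\<forall>ia\<in>{..<m}. x' ia \<in> UNIV" by simp
      have "x \<in> extensional {..<m}" using Suc.prems(1) unfolding cube_def by (simp add: PiE_iff)
      then show "x' \<in> extensional {..<m}" unfolding x'_def extensional_def using i(1) by auto
    qed
    have "{i'\<in>{..<m}. x' i' \<noteq> y i'} = {i'\<in>{..<m}. x i' \<noteq> y i'} - {i}"
      using i unfolding x'_def by auto
    then have "card {i'\<in>{..<m}. x' i' \<noteq> y i'} = c" using Suc.prems(3) i by simp
    moreover have "\<forall>i\<in>dep_set m g j. x' i = y i" using Suc.prems(2) nd by (auto simp: x'_def)
    ultimately have "g x' j = g y j" using Suc.IH x'c by blast
    then show ?case using gx by simp
  qed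
  then show ?thesis using assms by blast
qed

lemma indep_blocks:
  assumes "finite I" "\<And>a. a \<in> I \<Longrightarrow> K a \<subseteq> {..<k}" "disjoint_family_on K I"
    "\<And>a \<omega>. a \<in> I \<Longrightarrow> Y a (restrict \<omega> (K a)) = Y a \<omega>"
  shows "prob_space.indep_vars (measure_pmf (pmf_of_set (cube k))) (\<lambda>_. borel) (Y :: _ \<Rightarrow> _ \<Rightarrow> real) I"
proof -
  let ?M = "measure_pmf (Pi_pmf {..<k} undefined (\<lambda>_. pmf_of_set (UNIV::bool set)))"
  have i1: "prob_space.indep_vars ?M (\<lambda>_. count_space UNIV) (\<lambda>x f. f x) {..<k}"
    by (rule indep_vars_Pi_pmf) auto
  have i2: "prob_space.indep_vars ?M (\<lambda>j. PiM (K j) (\<lambda>_. count_space UNIV)) (\<lambda>j \<omega>. restrict (\<lambda>i. \<omega> i) (K j)) I"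
    using assms(2,3) by (intro prob_space.indep_vars_restrict[OF measure_pmf.prob_space_axioms i1]) auto
  have i3: "prob_space.indep_vars ?M (\<lambda>_. borel) (\<lambda>j \<omega>. Y j (restrict (\<lambda>i. \<omega> i) (K j))) I"
  proof (rule prob_space.indep_vars_compose2[OF measure_pmf.prob_space_axioms i2])
    fix j assume "j \<in> I"
    then have "finite (K j)" using assms(2) finite_subset by blast
    then show "Y j \<in> borel_measurable (PiM (K j) (\<lambda>_. count_space UNIV))"
      by (rule borel_measurable_PiM_bool)
  qed
  have "prob_space.indep_vars ?M (\<lambda>_. borel) (\<lambda>j \<omega>. Y j (restrict (\<lambda>i. \<omega> i) (K j))) I = prob_space.indep_vars ?M (\<lambda>_. borel) Y I"
    by (rule prob_space.indep_vars_cong[OF measure_pmf.prob_space_axioms]) (auto simp: fun_eq_iff assms(4))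
  with i3 have "prob_space.indep_vars ?M (\<lambda>_. borel) Y I" by simp
  then show ?thesis by (simp add: cube_Pi_pmf)
qed

lemma abs_diff_le1: "\<bar>measure_pmf.prob p A - measure_pmf.prob q A\<bar> \<le> 1"
proof -
  have "0 \<le> measure_pmf.prob p A" "measure_pmf.prob p A \<le> 1"
       "0 \<le> measure_pmf.prob q A" "measure_pmf.prob q A \<le> 1"
    by (simp_all add: measure_pmf.prob_le_1)
  then show ?thesis by linarith
qed

lemma tv_ge: "\<bar>measure_pmf.prob p A - measure_pmf.prob q A\<bar> \<le> tv_dist p q"
  unfolding tv_dist_def
proof (rule cSUP_upper)
  show "bdd_above (range (\<lambda>A. \<bar>measure_pmf.prob p A - measure_pmf.prob q A\<bar>))"
    by (rule bdd_aboveI[of _ 1]) (auto simp: abs_diff_le1)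
qed auto

lemma tv_witness:
  assumes "tv_dist p q > e"
  shows "\<exists>A. measure_pmf.prob p A - measure_pmf.prob q A > e"
proof -
  have "bdd_above (range (\<lambda>A. \<bar>measure_pmf.prob p A - measure_pmf.prob q A\<bar>))"
    by (rule bdd_aboveI[of _ 1]) (auto simp: abs_diff_le1)
  then obtain A where A: "\<bar>measure_pmf.prob p A - measure_pmf.prob q A\<bar> > e"
    using assms unfolding tv_dist_def by (subst (asm) less_cSUP_iff) auto
  show ?thesis
  proof (cases "measure_pmf.prob p A - measure_pmf.prob q A > e")
    case True then show ?thesis by blast
  next
    case False
    then have "measure_pmf.prob q A - measure_pmf.prob p A > e" using A by linarith
    moreover have "measure_pmf.prob p (space (measure_pmf p) - A) = 1 - measure_pmf.prob p A"
      by (rule measure_pmf.prob_compl) simp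
    moreover have "measure_pmf.prob q (space (measure_pmf q) - A) = 1 - measure_pmf.prob q A"
      by (rule measure_pmf.prob_compl) simp
    ultimately show ?thesis by (intro exI[of _ "space (measure_pmf p) - A"]) simp
  qed
qed



theorem mainTheorem15:
  fixes q n m d r' :: nat and \<Lambda> :: "nat set" and \<epsilon> :: real
    and g :: "(nat \<Rightarrow> bool) \<Rightarrow> (nat \<Rightarrow> bool)" and idx :: "nat \<Rightarrow> nat"
  assumes "3 \<le> q" and "q \<le> n"
    and "\<Lambda> \<subseteq> {..<q}" and "\<Lambda> \<noteq> {}"
    and "0 \<le> \<epsilon>" and "\<epsilon> \<le> 1"
    and "is_map m n g" and "local m n d g"
    and "1 \<le> r'"
    and "\<forall>a<r'. idx a < n"
    and "inj_on idx {..<r'}"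
    and "\<forall>a<r'. \<forall>b<r'. a \<noteq> b \<longrightarrow>
           nbhd_inputs m n g (idx a) \<inter> nbhd_inputs m n g (idx b) = {}"
    and "\<forall>a<r'. tv_dist (marginal (P_dist m g) (nbhd m n g (idx a)))
                        (unif_on (nbhd m n g (idx a))) > \<epsilon>"
  shows "tv_dist (P_dist m g) (D_dist n q \<Lambda>)
           \<ge> 1 - (2 / (real (card (Dsupp n q \<Lambda>)) / 2 ^ n)) * exp (- (\<epsilon>\<^sup>2 * real r') / 2)"
proof -
  define N where "N a = nbhd m n g (idx a)" for a
  define U where "U a = nbhd_inputs m n g (idx a)" for a
  define I where "I = {..<r'}"
  define B where "B = pmf_of_set (cube m)"
  define C where "C = pmf_of_set (cube n)"
  have finI: "finite I" unfolding I_def by simp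
  have Nsub: "N a \<subseteq> {..<n}" for a unfolding N_def nbhd_def by auto
  have Usub: "U a \<subseteq> {..<m}" for a unfolding U_def nbhd_inputs_def dep_set_def by auto
  have depU: "dep_set m g j \<subseteq> U a" if "j \<in> N a" for j a
    using that unfolding U_def N_def nbhd_inputs_def by auto
  have Udisj: "disjoint_family_on U I"
    using assms(12) unfolding disjoint_family_on_def U_def I_def by auto
  have Ndisj: "disjoint_family_on N I"
    unfolding disjoint_family_on_def
  proof (intro ballI impI)
    fix a b assume ab: "a \<in> I" "b \<in> I" "a \<noteq> b"
    show "N a \<inter> N b = {}"
    proof (rule ccontr)
      assume "N a \<inter> N b \<noteq> {}"
      then obtain j where j: "j \<in> N a" "j \<in> N b" by blast
      then have "dep_set m g j \<noteq> {}" unfolding N_def nbhd_def by auto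
      moreover have "dep_set m g j \<subseteq> U a \<inter> U b" using depU j by blast
      ultimately show False using Udisj ab unfolding disjoint_family_on_def by blast
    qed
  qed
  have "\<forall>a\<in>I. \<exists>A. measure_pmf.prob (marginal (P_dist m g) (N a)) A - measure_pmf.prob (unif_on (N a)) A > \<epsilon>"
    using assms(13) tv_witness unfolding I_def N_def by blast
  then obtain Af where Af: "\<And>a. a \<in> I \<Longrightarrow> measure_pmf.prob (marginal (P_dist m g) (N a)) (Af a) - measure_pmf.prob (unif_on (N a)) (Af a) > \<epsilon>"
    by metis
  define p where "p a = measure_pmf.prob (marginal (P_dist m g) (N a)) (Af a)" for a
  define u where "u a = measure_pmf.prob (unif_on (N a)) (Af a)" for a
  define ext where "ext a \<omega> = (\<lambda>i. if i \<in> U a then \<omega> i else if i < m then False else undefined)" for a \<omega>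
  define S' where "S' a = {\<omega>. restrict (g (ext a \<omega>)) (N a) \<in> Af a}" for a
  define Z where "Z a = (indicator (S' a) :: (nat \<Rightarrow> bool) \<Rightarrow> real)" for a
  define Sn where "Sn a = {z. restrict z (N a) \<in> Af a}" for a
  define W where "W a = (indicator (Sn a) :: (nat \<Rightarrow> bool) \<Rightarrow> real)" for a
  have ext_cube: "ext a \<omega> \<in> cube m" for a \<omega>
    unfolding cube_def ext_def PiE_iff extensional_def using Usub by auto
  have ext_restrict: "ext a (restrict \<omega> (U a)) = ext a \<omega>" for a \<omega>
    unfolding ext_def by (auto simp: fun_eq_iff)
  have Z_cube: "Z a \<omega> = W a (g \<omega>)" if "\<omega> \<in> cube m" for a \<omega>
  proof -
    have "restrict (g (ext a \<omega>)) (N a) = restrict (g \<omega>) (N a)"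
    proof (rule restrict_ext)
      fix j assume j: "j \<in> N a"
      show "g (ext a \<omega>) j = g \<omega> j"
      proof (rule dep_local[OF ext_cube that])
        show "\<forall>i\<in>dep_set m g j. ext a \<omega> i = \<omega> i" using depU[OF j] unfolding ext_def by auto
      qed
    qed
    then show ?thesis unfolding Z_def W_def S'_def Sn_def indicator_def by simp
  qed
  have indZ: "prob_space.indep_vars (measure_pmf B) (\<lambda>_. borel) Z I"
    unfolding B_def
  proof (rule indep_blocks[OF finI _ Udisj])
    show "\<And>a. a \<in> I \<Longrightarrow> U a \<subseteq> {..<m}" using Usub by blast
    show "\<And>a \<omega>. a \<in> I \<Longrightarrow> Z a (restrict \<omega> (U a)) = Z a \<omega>"
      unfolding Z_def S'_def indicator_def by (simp add: ext_restrict)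
  qed
  have indW: "prob_space.indep_vars (measure_pmf C) (\<lambda>_. borel) W I"
    unfolding C_def
  proof (rule indep_blocks[OF finI _ Ndisj])
    show "\<And>a. a \<in> I \<Longrightarrow> N a \<subseteq> {..<n}" using Nsub by blast
    show "\<And>a \<omega>. a \<in> I \<Longrightarrow> W a (restrict \<omega> (N a)) = W a \<omega>"
      unfolding W_def Sn_def indicator_def by simp
  qed
  have EW: "measure_pmf.expectation C (W a) = u a" for a
  proof -
    have "measure_pmf.expectation C (W a) = measure_pmf.prob C (Sn a)"
      unfolding W_def by simp
    also have "\<dots> = measure_pmf.prob (map_pmf (\<lambda>x. restrict x (N a)) C) (Af a)"
      unfolding Sn_def by (simp add: vimage_def)
    also have "map_pmf (\<lambda>x. restrict x (N a)) C = unif_on (N a)"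
      unfolding C_def by (rule restrict_Pi_pmf_unif[OF Nsub])
    finally show ?thesis unfolding u_def .
  qed
  have BS: "measure_pmf.prob B (S' a) = measure_pmf.prob B (g -` Sn a)" for a
  proof (rule measure_eq_AE)
    show "AE x in measure_pmf B. (x \<in> S' a) = (x \<in> g -` Sn a)"
    proof (rule AE_pmfI)
      fix x assume "x \<in> set_pmf B"
      then have "x \<in> cube m" unfolding B_def by simp
      from Z_cube[OF this, of a] show "(x \<in> S' a) = (x \<in> g -` Sn a)"
        unfolding Z_def W_def indicator_def by (auto split: if_splits)
    qed
  qed auto
  have EZ: "measure_pmf.expectation B (Z a) = p a" for a
  proof -
    have "measure_pmf.expectation B (Z a) = measure_pmf.prob B (S' a)"
      unfolding Z_def by simp
    also have "\<dots> = measure_pmf.prob B (g -` Sn a)" by (rule BS)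
    also have "\<dots> = measure_pmf.prob (P_dist m g) (Sn a)"
      unfolding P_dist_def B_def by simp
    also have "\<dots> = p a"
      unfolding p_def marginal_def Sn_def by (simp add: vimage_def)
    finally show ?thesis .
  qed
  define t where "t = \<epsilon> * real r' / 2"
  have t0: "t \<ge> 0" unfolding t_def using assms(5) by simp
  have rpos: "real r' > 0" using assms(9) by simp
  have sumI: "(\<Sum>i\<in>I. ((1::real) - 0)\<^sup>2) = real r'" unfolding I_def by simp
  have cI: "card I = r'" unfolding I_def by simp
  have expo: "- (2 * t\<^sup>2 / real r') = - (\<epsilon>\<^sup>2 * real r' / 2)"
    unfolding t_def using rpos by (simp add: field_simps power2_eq_square)
  define e where "e = exp (- (\<epsilon>\<^sup>2 * real r') / 2)"
  define \<mu>U where "\<mu>U = (\<Sum>a\<in>I. u a)"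
  define \<mu>P where "\<mu>P = (\<Sum>a\<in>I. p a)"
  have gap: "\<mu>U + t \<le> \<mu>P - t"
  proof -
    have "(\<Sum>a\<in>I. \<epsilon>) \<le> (\<Sum>a\<in>I. p a - u a)"
      using Af by (intro sum_mono) (simp add: p_def u_def less_imp_le)
    then have "real r' * \<epsilon> \<le> \<mu>P - \<mu>U" unfolding \<mu>P_def \<mu>U_def I_def by (simp add: sum_subtractf)
    then show ?thesis unfolding t_def by (simp add: algebra_simps)
  qed
  interpret HW: Hoeffding_ineq "measure_pmf C" I W "\<lambda>_. 0" "\<lambda>_. 1" "\<Sum>a\<in>I. measure_pmf.expectation C (W a)"
  proof unfold_locales
    show "finite I" by (rule finI)
    show "prob_space.indep_vars (measure_pmf C) (\<lambda>_. borel) W I" by (rule indW)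
    show "\<And>i. i \<in> I \<Longrightarrow> AE x in measure_pmf C. W i x \<in> {0..1}"
      unfolding W_def by (auto simp: indicator_def)
  qed simp
  have UT: "measure_pmf.prob C {z. (\<Sum>a\<in>I. W a z) \<ge> \<mu>U + t} \<le> e"
  proof -
    have "measure_pmf.prob C {z. (\<Sum>a\<in>I. W a z) \<ge> \<mu>U + t} \<le> exp (- (2 * t\<^sup>2 / real r'))"
      using HW.Hoeffding_ineq_ge[OF t0] rpos by (simp add: EW \<mu>U_def cI)
    then show ?thesis using expo by (simp add: e_def)
  qed
  interpret HZ: Hoeffding_ineq "measure_pmf B" I Z "\<lambda>_. 0" "\<lambda>_. 1" "\<Sum>a\<in>I. measure_pmf.expectation B (Z a)"
  proof unfold_locales
    show "finite I" by (rule finI)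
    show "prob_space.indep_vars (measure_pmf B) (\<lambda>_. borel) Z I" by (rule indZ)
    show "\<And>i. i \<in> I \<Longrightarrow> AE x in measure_pmf B. Z i x \<in> {0..1}"
      unfolding Z_def by (auto simp: indicator_def)
  qed simp
  have PT: "measure_pmf.prob B {\<omega>. (\<Sum>a\<in>I. Z a \<omega>) \<le> \<mu>P - t} \<le> e"
  proof -
    have "measure_pmf.prob B {\<omega>. (\<Sum>a\<in>I. Z a \<omega>) \<le> \<mu>P - t} \<le> exp (- (2 * t\<^sup>2 / real r'))"
      using HZ.Hoeffding_ineq_le[OF t0] rpos by (simp add: EZ \<mu>P_def cI)
    then show ?thesis using expo by (simp add: e_def)
  qed
  define T where "T = {z. (\<Sum>a\<in>I. W a z) \<ge> \<mu>U + t}"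
  define ET where "ET = {\<omega>. (\<Sum>a\<in>I. Z a \<omega>) \<ge> \<mu>U + t}"
  have PdT: "measure_pmf.prob (P_dist m g) T = measure_pmf.prob B ET"
  proof -
    have "measure_pmf.prob (P_dist m g) T = measure_pmf.prob B (g -` T)"
      unfolding P_dist_def B_def by simp
    also have "\<dots> = measure_pmf.prob B ET"
    proof (rule measure_eq_AE)
      show "AE x in measure_pmf B. (x \<in> g -` T) = (x \<in> ET)"
      proof (rule AE_pmfI)
        fix x assume "x \<in> set_pmf B"
        then have "x \<in> cube m" unfolding B_def by simp
        then show "(x \<in> g -` T) = (x \<in> ET)"
          unfolding T_def ET_def using Z_cube by simp
      qed
    qed auto
    finally show ?thesis .
  qed
  have PET: "measure_pmf.prob B ET \<ge> 1 - e"
  proof -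
    have "space (measure_pmf B) - ET \<subseteq> {\<omega>. (\<Sum>a\<in>I. Z a \<omega>) \<le> \<mu>P - t}"
      unfolding ET_def using gap by auto
    then have "measure_pmf.prob B (space (measure_pmf B) - ET) \<le> measure_pmf.prob B {\<omega>. (\<Sum>a\<in>I. Z a \<omega>) \<le> \<mu>P - t}"
      by (intro measure_pmf.finite_measure_mono) auto
    then have "measure_pmf.prob B (space (measure_pmf B) - ET) \<le> e"
      using PT by linarith
    moreover have "measure_pmf.prob B (space (measure_pmf B) - ET) = 1 - measure_pmf.prob B ET"
      by (rule measure_pmf.prob_compl) simp
    ultimately show ?thesis by simp
  qed
  define c where "c = card (Dsupp n q \<Lambda>)"
  have Dsub: "Dsupp n q \<Lambda> \<subseteq> cube n" unfolding Dsupp_def by auto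
  have finD: "finite (Dsupp n q \<Lambda>)" by (rule finite_subset[OF Dsub finite_cube])
  obtain l where l: "l \<in> \<Lambda>" using assms(4) by blast
  have lq: "l < q" using l assms(3) by auto
  define x0 where "x0 = (\<lambda>i. if i < n then i < l else undefined)"
  have "x0 \<in> cube n" unfolding x0_def cube_def PiE_iff extensional_def by auto
  moreover have "hweight n x0 = l"
  proof -
    have "{i\<in>{..<n}. x0 i} = {..<l}" unfolding x0_def using lq assms(2) by auto
    then show ?thesis unfolding hweight_def by simp
  qed
  ultimately have "x0 \<in> Dsupp n q \<Lambda>" unfolding Dsupp_def using l lq by simp
  then have Dne: "Dsupp n q \<Lambda> \<noteq> {}" by blast
  have cpos: "real c > 0" unfolding c_def using Dne finD by (simp add: card_gt_0_iff)
  have cle: "real c \<le> 2 ^ n"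
    unfolding c_def using card_mono[OF finite_cube Dsub] by (simp add: card_cube)
  have DT: "measure_pmf.prob (D_dist n q \<Lambda>) T \<le> (2 ^ n / real c) * e"
  proof -
    have "measure_pmf.prob (D_dist n q \<Lambda>) T = real (card (Dsupp n q \<Lambda> \<inter> T)) / real c"
      unfolding D_dist_def c_def using Dne finD by (simp add: measure_pmf_of_set)
    also have "\<dots> \<le> real (card (cube n \<inter> T)) / real c"
      using cpos Dsub by (intro divide_right_mono) (auto intro!: card_mono)
    also have "real (card (cube n \<inter> T)) = 2 ^ n * measure_pmf.prob C T"
      unfolding C_def by (simp add: measure_pmf_of_set card_cube)
    also have "measure_pmf.prob C T \<le> e" using UT unfolding T_def .
    finally show ?thesis using cpos by (simp add: divide_right_mono mult_left_mono)
  qed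
  have e0: "e \<ge> 0" unfolding e_def by simp
  have K1: "2 ^ n / real c \<ge> 1" using cle cpos by simp
  have "1 - (2 / (real c / 2 ^ n)) * e \<le> (1 - e) - (2 ^ n / real c) * e"
  proof -
    have "(2 / (real c / 2 ^ n)) * e = 2 * ((2 ^ n / real c) * e)" using cpos by (simp add: field_simps)
    moreover have "e \<le> (2 ^ n / real c) * e" using mult_right_mono[OF K1 e0] by simp
    ultimately show ?thesis by simp
  qed
  also have "\<dots> \<le> measure_pmf.prob (P_dist m g) T - measure_pmf.prob (D_dist n q \<Lambda>) T"
    using PdT PET DT by simp
  also have "\<dots> \<le> tv_dist (P_dist m g) (D_dist n q \<Lambda>)"
    using tv_ge by (metis abs_ge_self order_trans)
  finally show ?thesis unfolding c_def e_def .
qed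

end
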